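(* Let $n\in\mathbb{N}$ and $p^*\in[1,\infty]$. If $\mathcal{P}=\{x_1,\dots,x_n\}$ is a collection of $n$ points in $[0,1]$ (repetitions allowed) whose $L_{p^*}$-discrepancy is minimal among all collections of $n$ points in $[0,1]$, then for each $j=1,\dots,n$ the interval $[\frac{j-1}{n},\frac jn)$ contains exactly one point of $\mathcal{P}$.
   Context: For $\mathcal{P}=\{x_1,\dots,x_n\}\subseteq[0,1]$, the local discrepancy is $\Delta_{\mathcal{P}}(t)=\frac1n\#\{j:x_j\in[0,t)\}-t$ for $t\in[0,1]$, and $L_{p^*}(\mathcal{P})=\|\Delta_{\mathcal{P}}\|_{L_{p^*}([0,1])}$. *)

theory Defs
  imports "HOL-Probability.Probability"
begin

definition local_disc :: "nat \<Rightarrow> (nat \<Rightarrow> real) \<Rightarrow> real \<Rightarrow> real" where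
  "local_disc n x t = real (card {j\<in>{..<n}. x j \<in> {0..<t}}) / real n - t"

definition Lp_disc :: "ereal \<Rightarrow> nat \<Rightarrow> (nat \<Rightarrow> real) \<Rightarrow> real" where
  "Lp_disc p n x =
     (if p = \<infinity> then real_of_ereal (esssup (lebesgue_on {0..1}) (\<lambda>t. ereal \<bar>local_disc n x t\<bar>))
      else (LINT t:{0..1}|lborel. \<bar>local_disc n x t\<bar> powr (real_of_ereal p)) powr (1 / real_of_ereal p))"

end

theory Submission
  imports Defs
begin


lemma grid_count:
  assumes n: "n > 0" and t: "t \<in> {0..1}"
  shows "\<exists>m::nat. local_disc n (\<lambda>i. (2 * real i + 1) / (2 * real n)) t = (real m - real n * t) / real n
     \<and> real m \<ge> real n * t - 1/2 \<and> real m < real n * t + 1/2"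
proof -
  let ?g = "\<lambda>i. (2 * real i + 1) / (2 * real n)"
  have nn: "real n > 0" using n by simp
  have S: "{j\<in>{..<n}. ?g j \<in> {0..<t}} = {j. j < n \<and> real j < real n * t - 1/2}"
    using nn by (auto simp: field_simps)
  show ?thesis
  proof (cases "real n * t < 1/2")
    case True
    then have "{j\<in>{..<n}. ?g j \<in> {0..<t}} = {}" unfolding S by auto
    then have "local_disc n ?g t = (real 0 - real n * t) / real n"
      using nn by (simp add: local_disc_def field_simps)
    moreover have "real n * t \<ge> 0" using t nn by simp
    ultimately show ?thesis using True by (intro exI[of _ 0]) auto
  next
    case False
    define m where "m = nat (ceiling (real n * t - 1/2))"
    have m1: "real m \<ge> real n * t - 1/2" "real m < real n * t + 1/2"
      using False unfolding m_def by (auto simp: of_nat_nat ceiling_correct) linarith+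
    have "{j. j < n \<and> real j < real n * t - 1/2} = {..<m}"
    proof -
      have "real n * t \<le> real n" using t nn by (simp add: mult_left_le)
      moreover have "\<And>j. (j < m) \<longleftrightarrow> real j < real n * t - 1/2"
        unfolding m_def by (meson linorder_not_less nat_ceiling_le_eq)
      ultimately show ?thesis by force
    qed
    then have "card {j\<in>{..<n}. ?g j \<in> {0..<t}} = m" unfolding S by simp
    then have "local_disc n ?g t = (real m - real n * t) / real n"
      using nn by (simp add: local_disc_def field_simps)
    then show ?thesis using m1 by blast
  qed
qed

lemma grid_bound:
  assumes n: "n > 0" and t: "t \<in> {0..1}"
  shows "\<bar>local_disc n (\<lambda>i. (2 * real i + 1) / (2 * real n)) t\<bar> \<le> 1 / (2 * real n)"
proof -
  have nn: "real n > 0" using n by simp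
  obtain m :: nat where m: "local_disc n (\<lambda>i. (2 * real i + 1) / (2 * real n)) t = (real m - real n * t) / real n"
     "real m \<ge> real n * t - 1/2" "real m < real n * t + 1/2" using grid_count[OF n t] by blast
  have h: "\<bar>real m - real n * t\<bar> \<le> 1/2" using m by linarith
  have "\<bar>real m - real n * t\<bar> / real n \<le> (1/2) / real n"
    by (rule divide_right_mono[OF h]) simp
  then show ?thesis using m nn by (simp add: abs_divide)
qed

lemma grid_min:
  assumes n: "n > 0" and t: "t \<in> {0..1}"
  shows "\<bar>local_disc n (\<lambda>i. (2 * real i + 1) / (2 * real n)) t\<bar> \<le> \<bar>local_disc n y t\<bar>"
proof -
  have nn: "real n > 0" using n by simp
  obtain m :: nat where m: "local_disc n (\<lambda>i. (2 * real i + 1) / (2 * real n)) t = (real m - real n * t) / real n"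
     "real m \<ge> real n * t - 1/2" "real m < real n * t + 1/2" using grid_count[OF n t] by blast
  define k where "k = card {j\<in>{..<n}. y j \<in> {0..<t}}"
  have ly: "local_disc n y t = (real k - real n * t) / real n"
    using nn unfolding local_disc_def k_def by (simp add: field_simps)
  have h: "\<bar>real m - real n * t\<bar> \<le> \<bar>real k - real n * t\<bar>"
  proof (cases "k = m")
    case False
    then have "k \<ge> m + 1 \<or> k + 1 \<le> m" by linarith
    then have "real k \<ge> real m + 1 \<or> real k + 1 \<le> real m" by (auto simp flip: of_nat_add)
    then show ?thesis using m by linarith
  qed simp
  have "\<bar>real m - real n * t\<bar> / real n \<le> \<bar>real k - real n * t\<bar> / real n"
    by (rule divide_right_mono[OF h]) simp
  then show ?thesis using m ly nn by (simp add: abs_divide)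
qed


lemma bad_interval:
  assumes n: "n > 0" and pts: "\<forall>i<n. x i \<in> {0..1}" and j: "1 \<le> j" "j \<le> n"
    and bad: "card {i\<in>{..<n}. x i \<in> {0..<real j / real n}} \<noteq> j"
  shows "\<exists>l. 0 \<le> l \<and> l < real j / real n \<and>
     (\<forall>t\<in>{l<..<real j / real n}. \<bar>local_disc n x t\<bar> \<ge> 3 / (4 * real n))"
proof -
  define u where "u = real j / real n"
  have nn: "real n > 0" using n by simp
  have u0: "u > 0" using j nn unfolding u_def by simp
  define A where "A = x ` {i\<in>{..<n}. x i < u}"
  have finA: "finite A" unfolding A_def by simp
  define l0 where "l0 = (if A = {} then 0 else Max A)"
  have l0u: "l0 < u" and l00: "0 \<le> l0"
  proof -
    show "l0 < u"
    proof (cases "A = {}")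
      case True then show ?thesis using u0 unfolding l0_def by simp
    next
      case False
      then have "Max A \<in> A" using finA by simp
      then show ?thesis using False unfolding l0_def A_def by auto
    qed
    show "0 \<le> l0"
    proof (cases "A = {}")
      case True then show ?thesis unfolding l0_def by simp
    next
      case False
      then obtain a where "a \<in> A" by auto
      then have "a \<le> Max A" "a \<ge> 0" using finA pts unfolding A_def by auto
      then show ?thesis using False unfolding l0_def by simp
    qed
  qed
  define l where "l = max l0 (u - 1 / (4 * real n))"
  define k where "k = card {i\<in>{..<n}. x i \<in> {0..<u}}"
  have kj: "k \<noteq> j" using bad unfolding k_def u_def .
  have "\<forall>t\<in>{l<..<u}. \<bar>local_disc n x t\<bar> \<ge> 3 / (4 * real n)"
  proof
    fix t assume t: "t \<in> {l<..<u}"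
    have "{i\<in>{..<n}. x i \<in> {0..<t}} = {i\<in>{..<n}. x i \<in> {0..<u}}"
    proof safe
      fix i assume "i < n" "x i \<in> {0..<t}"
      then show "x i \<in> {0..<u}" using t by auto
    next
      fix i assume i: "i < n" "x i \<in> {0..<u}"
      then have "x i \<in> A" unfolding A_def by auto
      then have "x i \<le> l0" using finA unfolding l0_def by auto
      then show "x i \<in> {0..<t}" using i t unfolding l_def by auto
    qed
    then have ld: "local_disc n x t = (real k - real n * t) / real n"
      using nn unfolding local_disc_def k_def by (simp add: field_simps)
    have tt: "real n * t > real j - 1/4" "real n * t < real j"
      using t nn unfolding l_def u_def by (auto simp: field_simps)
    have "\<bar>real k - real n * t\<bar> \<ge> 3/4"
    proof (cases "k < j")
      case True then have "real k \<le> real j - 1" by simp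
      then show ?thesis using tt by linarith
    next
      case False then have "real k \<ge> real j + 1" using kj by simp
      then show ?thesis using tt by linarith
    qed
    then have "\<bar>real k - real n * t\<bar> / real n \<ge> (3/4) / real n"
      by (rule divide_right_mono) simp
    then show "\<bar>local_disc n x t\<bar> \<ge> 3 / (4 * real n)" using ld by (simp add: abs_divide)
  qed
  moreover have "0 \<le> l" "l < u" using l00 l0u nn unfolding l_def by auto
  ultimately show ?thesis unfolding u_def by blast
qed


lemma card_sum_eq: "real (card {j\<in>{..<(n::nat)}. P j}) = (\<Sum>j<n. if P j then 1 else 0)"
  apply (subst real_of_card)
  apply (subst sum.inter_filter[symmetric])
  by auto

lemma ld_meas: "local_disc n y \<in> borel_measurable borel"
proof -
  have "local_disc n y = (\<lambda>t. (\<Sum>j<n. if 0 \<le> y j \<and> y j < t then 1 else 0) / real n - t)"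
    unfolding local_disc_def by (subst card_sum_eq) simp
  also have "\<dots> \<in> borel_measurable borel" by measurable
  finally show ?thesis .
qed

lemma ld_meas_leb: "(\<lambda>t. ereal \<bar>local_disc n y t\<bar>) \<in> borel_measurable (lebesgue_on S)"
proof -
  have "(\<lambda>t. ereal \<bar>local_disc n y t\<bar>) \<in> borel_measurable borel"
    using ld_meas[of n y] by measurable
  then have "(\<lambda>t. ereal \<bar>local_disc n y t\<bar>) \<in> borel_measurable lborel" by simp
  then have "(\<lambda>t. ereal \<bar>local_disc n y t\<bar>) \<in> borel_measurable (completion lborel)"
    by (rule measurable_completion)
  then show ?thesis by (rule measurable_restrict_space1)
qed

lemma ld_bound:
  assumes n: "n > 0" and t: "t \<in> {0..1}"
  shows "\<bar>local_disc n y t\<bar> \<le> 1"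
proof -
  have "card {j\<in>{..<n}. y j \<in> {0..<t}} \<le> card {..<n}" by (rule card_mono) auto
  then have c: "real (card {j\<in>{..<n}. y j \<in> {0..<t}}) / real n \<le> 1" "0 \<le> real (card {j\<in>{..<n}. y j \<in> {0..<t}}) / real n"
    using n by (auto simp: field_simps)
  moreover have "0 \<le> t" "t \<le> 1" using t by auto
  ultimately show ?thesis unfolding local_disc_def abs_le_iff by linarith
qed

lemma ld_integrable:
  assumes n: "n > 0" and r: "r \<ge> 1"
  shows "set_integrable lborel {0..1} (\<lambda>t. \<bar>local_disc n y t\<bar> powr r)"
  unfolding set_integrable_def
proof (rule integrableI_bounded_set_indicator[where B=1])
  show "{0..1::real} \<in> sets lborel" by simp
  show "(\<lambda>t. \<bar>local_disc n y t\<bar> powr r) \<in> borel_measurable lborel"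
    using ld_meas[of n y] by measurable
  show "emeasure lborel {0..1::real} < \<infinity>" by simp
  show "AE x in lborel. x \<in> {0..1} \<longrightarrow> norm (\<bar>local_disc n y x\<bar> powr r) \<le> 1"
    using ld_bound[OF n] r by (auto intro!: AE_I2 powr_le1)
qed



lemma integral_strict:
  fixes F G :: "real \<Rightarrow> real"
  assumes iF: "set_integrable lborel {0..1} F" and iG: "set_integrable lborel {0..1} G"
    and le: "\<forall>t\<in>{l<..<u}. G t + d \<le> F t" and le2: "\<forall>t\<in>{0..1}. G t \<le> F t"
    and lu: "0 \<le> l" "l < u" "u \<le> 1" and d: "d > 0"
  shows "(LINT t:{0..1}|lborel. G t) < (LINT t:{0..1}|lborel. F t)"
proof -
  let ?I = "{l<..<u}"
  have iI: "set_integrable lborel {0..1::real} (indicator ?I :: real \<Rightarrow> real)"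
    unfolding set_integrable_def
    by (rule integrableI_bounded_set_indicator[where B=1]) (auto simp: indicator_def)
  have iH: "set_integrable lborel {0..1} (\<lambda>t. G t + d * indicator ?I t)"
    using iG iI by (intro set_integral_add) auto
  have "(LINT t:{0..1}|lborel. G t + d * indicator ?I t) \<le> (LINT t:{0..1}|lborel. F t)"
  proof (rule set_integral_mono[OF iH iF])
    fix t :: real assume t: "t \<in> {0..1}"
    show "G t + d * indicator ?I t \<le> F t"
      using le le2 t by (cases "t \<in> ?I") auto
  qed
  moreover have "(LINT t:{0..1}|lborel. G t + d * indicator ?I t) =
      (LINT t:{0..1}|lborel. G t) + d * (LINT t:{0..1}|lborel. indicator ?I t)"
    using iG iI by simp
  moreover have "(LINT t:{0..1}|lborel. (indicator ?I t :: real)) = u - l"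
  proof -
    have "(\<lambda>t. indicator {0..1} t *\<^sub>R (indicator ?I t :: real)) = indicator ?I"
      using lu by (auto simp: indicator_def fun_eq_iff)
    then show ?thesis using lu unfolding set_lebesgue_integral_def by simp
  qed
  ultimately show ?thesis using d lu by (smt (verit) mult_pos_pos)
qed


lemma esssup_lower:
  assumes n: "n > 0" and lu: "0 \<le> l" "l < u" "u \<le> 1"
    and bnd: "\<forall>t\<in>{l<..<u}. \<bar>local_disc n x t\<bar> \<ge> c"
  shows "esssup (lebesgue_on {0..1}) (\<lambda>t. ereal \<bar>local_disc n x t\<bar>) \<ge> ereal c"
proof (rule ccontr)
  let ?M = "lebesgue_on {0..1::real}"
  let ?f = "\<lambda>t. ereal \<bar>local_disc n x t\<bar>"
  let ?I = "{l<..<u}"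
  assume "\<not> ereal c \<le> esssup ?M ?f"
  then have lt: "esssup ?M ?f < ereal c" by simp
  have "AE t in ?M. ?f t \<le> esssup ?M ?f" by (rule esssup_AE)
  then have "AE t in ?M. t \<notin> ?I"
  proof (rule AE_mp, intro AE_I2 impI)
    fix t assume "?f t \<le> esssup ?M ?f"
    then have "?f t < ereal c" using lt by (rule order.strict_trans1)
    then have "\<bar>local_disc n x t\<bar> < c" by simp
    then show "t \<notin> ?I" using bnd by force
  qed
  moreover have Isets: "?I \<in> sets ?M"
    using lu by (auto simp: sets_restrict_space_iff)
  ultimately have "?I \<in> null_sets ?M" using AE_iff_null_sets by blast
  then have "emeasure ?M ?I = 0" by auto
  moreover have "emeasure ?M ?I = emeasure lborel ?I"
    using lu by (subst emeasure_restrict_space) auto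
  ultimately show False using lu by simp
qed

lemma esssup_upper:
  assumes "\<forall>t\<in>{0..1}. \<bar>local_disc n x t\<bar> \<le> c"
  shows "esssup (lebesgue_on {0..1}) (\<lambda>t. ereal \<bar>local_disc n x t\<bar>) \<le> ereal c"
proof (rule esssup_I)
  show "(\<lambda>t. ereal \<bar>local_disc n x t\<bar>) \<in> borel_measurable (lebesgue_on {0..1})"
    by (rule ld_meas_leb)
  have "AE t in lebesgue_on {0..1::real}. t \<in> {0..1}" using AE_space[of "lebesgue_on {0..1::real}"] by simp
  then show "AE t in lebesgue_on {0..1}. ereal \<bar>local_disc n x t\<bar> \<le> ereal c"
    by (rule AE_mp) (use assms in auto)
qed

theorem mainTheorem5:
  fixes n :: nat and p :: ereal and x :: "nat \<Rightarrow> real"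
  assumes p: "1 \<le> p"
    and pts: "\<forall>i<n. x i \<in> {0..1}"
    and opt: "\<forall>y :: nat \<Rightarrow> real. (\<forall>i<n. y i \<in> {0..1}) \<longrightarrow> Lp_disc p n x \<le> Lp_disc p n y"
  shows "\<forall>j\<in>{1..n}. card {i\<in>{..<n}. x i \<in> {(real j - 1) / real n ..< real j / real n}} = 1"
proof (cases "n = 0")
  case True then show ?thesis by simp
next
  case False
  then have n: "n > 0" by simp
  have nn: "real n > 0" using n by simp
  define g where "g = (\<lambda>i. (2 * real i + 1) / (2 * real n))"
  have gpts: "\<forall>i<n. g i \<in> {0..1}"
    using nn unfolding g_def by (auto simp: field_simps)
  have claim: "card {i\<in>{..<n}. x i \<in> {0..<real j / real n}} = j" if j: "1 \<le> j" "j \<le> n" for j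
  proof (rule ccontr)
    assume bad: "card {i\<in>{..<n}. x i \<in> {0..<real j / real n}} \<noteq> j"
    obtain l where l: "0 \<le> l" "l < real j / real n"
      and lb: "\<forall>t\<in>{l<..<real j / real n}. \<bar>local_disc n x t\<bar> \<ge> 3 / (4 * real n)"
      using bad_interval[OF n pts j bad] by blast
    define u where "u = real j / real n"
    have u1: "u \<le> 1" using j nn unfolding u_def by (simp add: field_simps)
    have "Lp_disc p n g < Lp_disc p n x"
    proof (cases "p = \<infinity>")
      case True
      let ?E = "\<lambda>y. esssup (lebesgue_on {0..1}) (\<lambda>t. ereal \<bar>local_disc n y t\<bar>)"
      have Eg: "?E g \<le> ereal (1 / (2 * real n))"
        using grid_bound[OF n] unfolding g_def by (intro esssup_upper) auto
      have Ex1: "?E x \<le> ereal 1"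
        using ld_bound[OF n] by (intro esssup_upper) auto
      have Ex2: "?E x \<ge> ereal (3 / (4 * real n))"
        using esssup_lower[OF n l(1) l(2)[folded u_def] u1] lb unfolding u_def by blast
      have "real_of_ereal (?E g) \<le> 1 / (2 * real n)"
        using Eg nn by (cases "?E g") auto
      moreover have "real_of_ereal (?E x) \<ge> 3 / (4 * real n)"
        using Ex1 Ex2 by (cases "?E x") auto
      moreover have "1 / (2 * real n) < 3 / (4 * real n)" using nn by (simp add: field_simps)
      ultimately show ?thesis using True unfolding Lp_disc_def by simp
    next
      case False
      then obtain r where pr: "p = ereal r" using p by (cases p) auto
      have r1: "r \<ge> 1" using p pr by simp
      let ?F = "\<lambda>t. \<bar>local_disc n x t\<bar> powr r"
      let ?G = "\<lambda>t. \<bar>local_disc n g t\<bar> powr r"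
      define d where "d = (3 / (4 * real n)) powr r - (1 / (2 * real n)) powr r"
      have d: "d > 0" unfolding d_def using nn r1
        by (simp add: powr_less_mono2 field_simps)
      have lt: "(LINT t:{0..1}|lborel. ?G t) < (LINT t:{0..1}|lborel. ?F t)"
      proof (rule integral_strict[OF ld_integrable[OF n] ld_integrable[OF n] _ _ l(1) l(2)[folded u_def] u1 d])
        show "\<forall>t\<in>{l<..<u}. ?G t + d \<le> ?F t"
        proof
          fix t assume t: "t \<in> {l<..<u}"
          then have t01: "t \<in> {0..1}" using l u1 by auto
          have "?G t \<le> (1 / (2 * real n)) powr r"
            using grid_bound[OF n t01] r1 unfolding g_def by (intro powr_mono2) auto
          moreover have "(3 / (4 * real n)) powr r \<le> ?F t"
            using lb t r1 nn unfolding u_def by (intro powr_mono2) auto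
          ultimately show "?G t + d \<le> ?F t" unfolding d_def by simp
        qed
        show "\<forall>t\<in>{0..1}. ?G t \<le> ?F t"
          using grid_min[OF n] r1 unfolding g_def by (auto intro!: powr_mono2)
      qed (use r1 in auto)
      have nonneg: "0 \<le> (LINT t:{0..1}|lborel. ?G t)"
        unfolding set_lebesgue_integral_def by (intro Bochner_Integration.integral_nonneg) (auto simp: indicator_def)
      have "(LINT t:{0..1}|lborel. ?G t) powr (1/r) < (LINT t:{0..1}|lborel. ?F t) powr (1/r)"
        using r1 nonneg lt by (intro powr_less_mono2) auto
      then show ?thesis using False pr unfolding Lp_disc_def by simp
    qed
    moreover have "Lp_disc p n x \<le> Lp_disc p n g" using opt gpts by blast
    ultimately show False by simp
  qed
  show ?thesis
  proof
    fix j assume j: "j \<in> {1..n}"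
    define A where "A = {i\<in>{..<n}. x i \<in> {0..<real j / real n}}"
    define B where "B = {i\<in>{..<n}. x i \<in> {0..<(real j - 1) / real n}}"
    have cA: "card A = j" using claim j unfolding A_def by auto
    have cB: "card B = j - 1"
    proof (cases "j = 1")
      case True then show ?thesis unfolding B_def by simp
    next
      case False
      then have "1 \<le> j - 1" "j - 1 \<le> n" using j by auto
      then have "card {i\<in>{..<n}. x i \<in> {0..<real (j - 1) / real n}} = j - 1"
        by (rule claim)
      moreover have "real (j - 1) = real j - 1" using j by auto
      ultimately show ?thesis unfolding B_def by metis
    qed
    have BA: "B \<subseteq> A" unfolding A_def B_def using nn by (auto simp: field_simps)
    have "{i\<in>{..<n}. x i \<in> {(real j - 1) / real n ..< real j / real n}} = A - B"
      unfolding A_def B_def using pts nn by (auto simp: field_simps)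
    moreover have "card (A - B) = 1"
      using card_Diff_subset[OF _ BA] cA cB j unfolding B_def by auto
    ultimately show "card {i\<in>{..<n}. x i \<in> {(real j - 1) / real n ..< real j / real n}} = 1" by simp
  qed
qed

end
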